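(* Consider the click-through auction setting with two bidders with equal values $v_1=v_2=v\ge 0$, and let $0\le l<h\le 1$. Suppose the CTR vector equals $(l,h)$ with probability $1/2$ and $(h,l)$ with probability $1/2$. Then for every $\varepsilon>0$ there is a calibrated, correlated information structure (with finitely many signals) whose revenue is at least $vh-\varepsilon$.
   Context: Setting. Bidder $i$ has known value per click $v_i$. The CTR vector $r=(r_1,r_2)\in[0,1]^2$ is drawn from a prior $G$ with finite support. An information structure is a probability distribution with finite support on pairs $(r,s)\in[0,1]^2\times[0,1]^2$ whose $r$-marginal is $G$. Given signals $s$, the winner $i^*$ maximizes $v_is_i$ (uniform tie-breaking), pays per click $p_{i^*}=\max_{j\ne i^*}v_js_j/s_{i^*}$ (revenue $0$ if $s_{i^*}=0$), only upon a click, which occurs with probability $r_{i^*}$; revenue is $\mathbb{E}[r_{i^*}p_{i^*}]$. Calibrated: $\mathbb{E}[r_i\mid s_i=t]=t$ for every $i$ and every $t$ with $\Pr[s_i=t]>0$. Correlated: not independent, where independent means $\mathbb{E}[r_i\mid s]=\mathbb{E}[r_i\mid s_i]$ for all $i$ and all $s$ in the support. *)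

theory Defs
  imports "HOL-Probability.Probability"
begin

text \<open>Points of an information structure: pairs (r, s) of a CTR vector r = (r1, r2)
  and a signal vector s = (s1, s2). Bidders are indexed by 1 and 2.\<close>

type_synonym point = "(real \<times> real) \<times> (real \<times> real)"

definition comp :: "nat \<Rightarrow> real \<times> real \<Rightarrow> real" where
  "comp i x = (if i = 1 then fst x else snd x)"

definition ctr :: "nat \<Rightarrow> point \<Rightarrow> real" where
  "ctr i x = comp i (fst x)"

definition sig :: "nat \<Rightarrow> point \<Rightarrow> real" where
  "sig i x = comp i (snd x)"

definition sym_prior :: "real \<Rightarrow> real \<Rightarrow> (real \<times> real) pmf" where
  "sym_prior l h = map_pmf (\<lambda>b. if b then (l, h) else (h, l)) (bernoulli_pmf (1/2))"

definition info_structure :: "(real \<times> real) pmf \<Rightarrow> point pmf \<Rightarrow> bool" where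
  "info_structure G I \<longleftrightarrow> finite (set_pmf I) \<and> map_pmf fst I = G \<and>
     (\<forall>x\<in>set_pmf I. \<forall>i\<in>{1,2::nat}. ctr i x \<in> {0..1} \<and> sig i x \<in> {0..1})"

definition calibrated :: "point pmf \<Rightarrow> bool" where
  "calibrated I \<longleftrightarrow> (\<forall>i\<in>{1,2::nat}. \<forall>t.
     measure_pmf.prob I {x. sig i x = t} > 0 \<longrightarrow>
     measure_pmf.expectation (cond_pmf I {x. sig i x = t}) (ctr i) = t)"

definition independent_is :: "point pmf \<Rightarrow> bool" where
  "independent_is I \<longleftrightarrow> (\<forall>i\<in>{1,2::nat}. \<forall>x\<in>set_pmf I.
     measure_pmf.expectation (cond_pmf I {y. snd y = snd x}) (ctr i) =
     measure_pmf.expectation (cond_pmf I {y. sig i y = sig i x}) (ctr i))"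

definition correlated :: "point pmf \<Rightarrow> bool" where
  "correlated I \<longleftrightarrow> \<not> independent_is I"

text \<open>Expected revenue collected from the winner i (0 if its signal is 0):
  click probability r_i times per-click price v_j s_j / s_i.\<close>
definition win_rev :: "real \<Rightarrow> real \<Rightarrow> nat \<Rightarrow> point \<Rightarrow> real" where
  "win_rev v1 v2 i x =
     (let j = (if i = 1 then 2 else 1) :: nat;
          vj = (if j = 1 then v1 else v2)
      in if sig i x = 0 then 0 else ctr i x * (vj * sig j x / sig i x))"

definition point_rev :: "real \<Rightarrow> real \<Rightarrow> point \<Rightarrow> real" where
  "point_rev v1 v2 x =
     (if v1 * sig 1 x > v2 * sig 2 x then win_rev v1 v2 1 x
      else if v1 * sig 1 x < v2 * sig 2 x then win_rev v1 v2 2 x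
      else (win_rev v1 v2 1 x + win_rev v1 v2 2 x) / 2)"

definition revenue :: "real \<Rightarrow> real \<Rightarrow> point pmf \<Rightarrow> real" where
  "revenue v1 v2 I = measure_pmf.expectation I (point_rev v1 v2)"

end

theory Submission
  imports Defs
begin

lemma cond_exp:
  fixes M :: "'a pmf" and g :: "'a \<Rightarrow> real"
  assumes fin: "finite (set_pmf M)" and pos: "measure_pmf.prob M A > 0"
    and z: "measure_pmf.expectation M (\<lambda>x. indicator A x * (g x - t)) = 0"
  shows "measure_pmf.expectation (cond_pmf M A) g = t"
proof -
  let ?S = "set_pmf M"
  let ?P = "measure_pmf.prob M A"
  have ne: "set_pmf M \<inter> A \<noteq> {}"
  proof
    assume "set_pmf M \<inter> A = {}"
    then have "measure_pmf.prob M A = 0"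
      using measure_Int_set_pmf[of M A] by (simp add: Int_commute)
    then show False using pos by simp
  qed
  have P: "?P = (\<Sum>a\<in>?S. indicator A a * pmf M a)"
  proof -
    have "?P = measure_pmf.prob M (A \<inter> ?S)" by (simp add: measure_Int_set_pmf Int_commute)
    also have "\<dots> = sum (pmf M) (A \<inter> ?S)" using fin by (simp add: measure_measure_pmf_finite)
    also have "\<dots> = (\<Sum>a\<in>?S. indicator A a * pmf M a)"
      using fin by (simp add: sum.inter_restrict indicator_def Int_commute if_distrib cong: if_cong)
    finally show ?thesis .
  qed
  have L: "measure_pmf.expectation (cond_pmf M A) g = (\<Sum>a\<in>?S. g a * (indicator A a * pmf M a / ?P))"
  proof (subst integral_measure_pmf_real[where A="?S"])
    show "finite ?S" by (rule fin)
    show "\<And>a. a \<in> set_pmf (cond_pmf M A) \<Longrightarrow> g a \<noteq> 0 \<Longrightarrow> a \<in> ?S"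
      using ne by simp
    show "(\<Sum>a\<in>?S. g a * pmf (cond_pmf M A) a) = (\<Sum>a\<in>?S. g a * (indicator A a * pmf M a / ?P))"
      by (intro sum.cong refl) (simp add: pmf_cond[OF ne] indicator_def)
  qed
  have Z: "(\<Sum>a\<in>?S. indicator A a * (g a - t) * pmf M a) = 0"
    using z by (subst (asm) integral_measure_pmf_real[where A="?S"]) (use fin in auto)
  have "(\<Sum>a\<in>?S. g a * (indicator A a * pmf M a)) = t * ?P"
  proof -
    have "(\<Sum>a\<in>?S. indicator A a * (g a - t) * pmf M a) =
          (\<Sum>a\<in>?S. g a * (indicator A a * pmf M a)) - t * (\<Sum>a\<in>?S. indicator A a * pmf M a)"
      by (simp add: sum_distrib_left sum_subtractf[symmetric] algebra_simps)
    with Z P show ?thesis by simp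
  qed
  then have "(\<Sum>a\<in>?S. g a * (indicator A a * pmf M a)) / ?P = t" using pos by simp
  then show ?thesis unfolding L by (simp add: sum_divide_distrib)
qed

definition aa :: "real \<Rightarrow> real \<Rightarrow> nat \<Rightarrow> nat \<Rightarrow> real" where
  "aa l h n k = l + (h - l) * real k / real (n + 1)"

definition ff :: "real \<Rightarrow> real \<Rightarrow> nat \<Rightarrow> bool \<Rightarrow> nat \<Rightarrow> point" where
  "ff l h n b k = (if b then ((l, h), (aa l h n k, aa l h n (Suc k)))
                   else ((h, l), (aa l h n (Suc k), aa l h n k)))"

definition II :: "real \<Rightarrow> real \<Rightarrow> nat \<Rightarrow> point pmf" where
  "II l h n = map_pmf (\<lambda>(b, k). ff l h n b k) (pair_pmf (bernoulli_pmf (1/2)) (binomial_pmf n (1/2)))"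

abbreviation PP :: "nat \<Rightarrow> nat \<Rightarrow> real" where
  "PP n k \<equiv> pmf (binomial_pmf n (1/2)) k"

lemma pmf_pair': "pmf (pair_pmf A B) x = pmf A (fst x) * pmf B (snd x)"
  by (cases x) (simp add: pmf_pair)

lemma EII:
  "measure_pmf.expectation (II l h n) g =
     (\<Sum>k\<le>n. PP n k * (g (ff l h n True k) + g (ff l h n False k))) / 2"
proof -
  have "measure_pmf.expectation (II l h n) g =
     (\<Sum>x\<in>UNIV \<times> {..n}. g (ff l h n (fst x) (snd x)) * pmf (pair_pmf (bernoulli_pmf (1/2)) (binomial_pmf n (1/2))) x)"
    unfolding II_def integral_map_pmf
    by (subst integral_measure_pmf_real[where A="UNIV \<times> {..n}"]) (auto simp: case_prod_beta)
  also have "\<dots> = (\<Sum>x\<in>UNIV \<times> {..n}. g (ff l h n (fst x) (snd x)) * (PP n (snd x) / 2))"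
    by (simp only: pmf_pair' pmf_bernoulli_half) (simp add: mult.commute)
  also have "\<dots> = (\<Sum>b\<in>UNIV. \<Sum>k\<le>n. g (ff l h n b k) * (PP n k / 2))"
    unfolding sum.cartesian_product by (rule sum.cong) auto
  also have "\<dots> = (\<Sum>k\<le>n. g (ff l h n True k) * (PP n k / 2)) + (\<Sum>k\<le>n. g (ff l h n False k) * (PP n k / 2))"
    by (simp only: UNIV_bool sum.insert_remove) simp
  also have "\<dots> = (\<Sum>k\<le>n. PP n k * (g (ff l h n True k) + g (ff l h n False k))) / 2"
    by (simp only: sum.distrib[symmetric] sum_divide_distrib) (intro sum.cong refl, simp add: field_simps del: pmf_binomial)
  finally show ?thesis .
qed

lemma PP_eq: "PP n k = real (n choose k) / 2^n"
proof (cases "k \<le> n")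
  case True
  have "(1/2::real)^k * (1 - 1/2)^(n-k) = (1/2)^(k + (n-k))" by (simp add: power_add)
  also have "\<dots> = (1/2)^n" using True by simp
  finally have e: "(1/2::real)^k * (1 - 1/2)^(n-k) = (1/2)^n" .
  have "PP n k = real (n choose k) * ((1/2)^k * (1 - 1/2)^(n-k))" by (simp only: pmf_binomial mult.assoc)
  also have "\<dots> = real (n choose k) / 2^n" by (simp only: e) (simp add: power_one_over)
  finally show ?thesis .
next
  case False
  then show ?thesis by (simp add: binomial_eq_0)
qed

lemma choose_rec: "Suc j * (n choose Suc j) = (n - j) * (n choose j)"
  using times_binomial_minus1_eq[of "Suc j" n] binomial_absorb_comp[of n j] by simp

lemma PP_rec: "PP n (Suc j) * real (Suc j) = PP n j * real (n - j)"
proof -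
  have "real (Suc j * (n choose Suc j)) = real ((n - j) * (n choose j))"
    by (simp only: choose_rec)
  then have e: "real (n choose Suc j) * real (Suc j) = real (n choose j) * real (n - j)"
    by (simp only: of_nat_mult mult.commute)
  show ?thesis unfolding PP_eq by (metis e times_divide_eq_left)
qed

lemma aa_inj: "l < h \<Longrightarrow> aa l h n i = aa l h n j \<longleftrightarrow> i = j"
  by (simp add: aa_def)

lemma calib_sum:
  assumes lh: "l < h"
  shows "(\<Sum>k\<le>n. PP n k * ((if aa l h n k = t then l - t else 0) +
                         (if aa l h n (Suc k) = t then h - t else 0))) = 0"
proof (cases "\<exists>j \<le> Suc n. t = aa l h n j")
  case False
  show ?thesis
  proof (rule sum.neutral, rule ballI)
    fix k assume "k \<in> {..n}"
    then have k: "k \<le> Suc n" "Suc k \<le> Suc n" by auto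
    then have "aa l h n k \<noteq> t" "aa l h n (Suc k) \<noteq> t" using False by blast+
    then show "PP n k * ((if aa l h n k = t then l - t else 0) +
                         (if aa l h n (Suc k) = t then h - t else 0)) = 0" by simp
  qed
next
  case True
  then obtain j where j: "j \<le> Suc n" "t = aa l h n j" by auto
  have pt: "PP n k * ((if aa l h n k = t then l - t else 0) + (if aa l h n (Suc k) = t then h - t else 0))
      = (if k = j then PP n k * (l - t) else 0) + (if Suc k = j then PP n k * (h - t) else 0)" for k
    using aa_inj[OF lh] j(2) by auto
  have S: "(\<Sum>k\<le>n. PP n k * ((if aa l h n k = t then l - t else 0) + (if aa l h n (Suc k) = t then h - t else 0)))
      = (\<Sum>k\<le>n. (if k = j then PP n k * (l - t) else 0)) + (\<Sum>k\<le>n. (if Suc k = j then PP n k * (h - t) else 0))"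
    by (simp only: pt sum.distrib)
  show ?thesis
  proof (cases j)
    case 0
    then have "l - t = 0" using j(2) by (simp add: aa_def)
    then show ?thesis unfolding S using 0 by simp
  next
    case (Suc i)
    have i: "i \<le> n" using j(1) Suc by simp
    have s1: "(\<Sum>k\<le>n. (if k = j then PP n k * (l - t) else 0)) = PP n (Suc i) * (l - t)"
    proof (cases "Suc i \<le> n")
      case True then show ?thesis using Suc by simp
    next
      case False then show ?thesis using Suc by (simp add: PP_eq)
    qed
    have s2: "(\<Sum>k\<le>n. (if Suc k = j then PP n k * (h - t) else 0)) = PP n i * (h - t)"
      using Suc i by simp
    define c where "c = (h - l) / (real n + 1)"
    have e1: "l - t = - c * real (Suc i)" using j(2) Suc by (simp add: aa_def c_def field_simps)
    have e2: "h - t = c * real (n - i)" using j(2) Suc i by (simp add: aa_def c_def of_nat_diff field_simps)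
    have "PP n (Suc i) * (l - t) + PP n i * (h - t) = c * (PP n i * real (n - i) - PP n (Suc i) * real (Suc i))"
      unfolding e1 e2 by (simp only: algebra_simps)
    also have "\<dots> = 0" by (simp only: PP_rec) simp
    finally show ?thesis unfolding S s1 s2 .
  qed
qed

lemma ff_simps:
  "ctr 1 (ff l h n True k) = l" "ctr 2 (ff l h n True k) = h"
  "ctr 1 (ff l h n False k) = h" "ctr 2 (ff l h n False k) = l"
  "sig 1 (ff l h n True k) = aa l h n k" "sig 2 (ff l h n True k) = aa l h n (Suc k)"
  "sig 1 (ff l h n False k) = aa l h n (Suc k)" "sig 2 (ff l h n False k) = aa l h n k"
  by (simp_all add: ff_def ctr_def sig_def comp_def)

lemma ff_simps2:
  "ctr (Suc 0) (ff l h n True k) = l" "ctr (Suc (Suc 0)) (ff l h n True k) = h"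
  "ctr (Suc 0) (ff l h n False k) = h" "ctr (Suc (Suc 0)) (ff l h n False k) = l"
  "sig (Suc 0) (ff l h n True k) = aa l h n k" "sig (Suc (Suc 0)) (ff l h n True k) = aa l h n (Suc k)"
  "sig (Suc 0) (ff l h n False k) = aa l h n (Suc k)" "sig (Suc (Suc 0)) (ff l h n False k) = aa l h n k"
  by (simp_all add: ff_def ctr_def sig_def comp_def)

lemma setII: "set_pmf (II l h n) = (\<lambda>(b, k). ff l h n b k) ` (UNIV \<times> {..n})"
  by (simp add: II_def)

lemma finII: "finite (set_pmf (II l h n))"
  unfolding setII by simp

lemma calibII:
  assumes lh: "l < h"
  shows "calibrated (II l h n)"
  unfolding calibrated_def
proof (intro ballI allI impI)
  fix i :: nat and t :: real
  assume i: "i \<in> {1,2}" and pos: "measure_pmf.prob (II l h n) {x. sig i x = t} > 0"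
  have z: "measure_pmf.expectation (II l h n) (\<lambda>x. indicator {x. sig i x = t} x * (ctr i x - t)) = 0"
  proof -
    have "measure_pmf.expectation (II l h n) (\<lambda>x. indicator {x. sig i x = t} x * (ctr i x - t)) =
       (\<Sum>k\<le>n. PP n k * ((if aa l h n k = t then l - t else 0) +
                         (if aa l h n (Suc k) = t then h - t else 0))) / 2"
      unfolding EII
    proof (intro arg_cong[where f="\<lambda>x. x / 2"] sum.cong refl)
      fix k
      show "PP n k * (indicator {x. sig i x = t} (ff l h n True k) * (ctr i (ff l h n True k) - t) +
             indicator {x. sig i x = t} (ff l h n False k) * (ctr i (ff l h n False k) - t)) =
            PP n k * ((if aa l h n k = t then l - t else 0) + (if aa l h n (Suc k) = t then h - t else 0))"
      proof -
        have "i = 1 \<or> i = 2" using i by simp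
        then show ?thesis
        proof
          assume "i = 1" then show ?thesis by (simp add: ff_simps ff_simps2 indicator_def)
        next
          assume "i = 2" then show ?thesis by (simp add: ff_simps ff_simps2 indicator_def add.commute)
        qed
      qed
    qed
    also have "\<dots> = 0" using calib_sum[OF lh] by simp
    finally show ?thesis .
  qed
  show "measure_pmf.expectation (cond_pmf (II l h n) {x. sig i x = t}) (ctr i) = t"
    by (rule cond_exp[OF finII pos z])
qed

lemma aa_range:
  assumes "0 \<le> l" "l < h" "h \<le> 1" "j \<le> Suc n"
  shows "0 \<le> aa l h n j \<and> aa l h n j \<le> 1"
proof -
  have q0: "0 \<le> real j / (real n + 1)" by simp
  have q1: "real j / (real n + 1) \<le> 1" using assms(4) by (simp add: divide_simps)
  have e: "aa l h n j = l + (h - l) * (real j / (real n + 1))" by (simp add: aa_def)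
  have "(h - l) * (real j / (real n + 1)) \<le> (h - l) * 1"
    by (rule mult_left_mono[OF q1]) (use assms in simp)
  then have "(h - l) * (real j / (real n + 1)) \<le> h - l" by simp
  moreover have "0 \<le> (h - l) * (real j / (real n + 1))" using q0 assms by simp
  ultimately show ?thesis unfolding e using assms by (intro conjI) linarith+
qed

lemma infoII:
  assumes "0 \<le> l" "l < h" "h \<le> 1"
  shows "info_structure (sym_prior l h) (II l h n)"
  unfolding info_structure_def
proof (intro conjI)
  show "finite (set_pmf (II l h n))" by (rule finII)
  have "map_pmf fst (II l h n) =
        map_pmf (\<lambda>b. if b then (l, h) else (h, l)) (map_pmf fst (pair_pmf (bernoulli_pmf (1/2)) (binomial_pmf n (1/2))))"
    unfolding II_def pmf.map_comp by (intro map_pmf_cong refl) (auto simp: ff_def)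
  then show "map_pmf fst (II l h n) = sym_prior l h"
    by (simp only: map_fst_pair_pmf sym_prior_def)
next
  show "\<forall>x\<in>set_pmf (II l h n). \<forall>i\<in>{1, 2::nat}. ctr i x \<in> {0..1} \<and> sig i x \<in> {0..1}"
  proof (intro ballI)
  fix x i assume x: "x \<in> set_pmf (II l h n)" and i: "i \<in> {1, 2::nat}"
  then obtain b k where bk: "x = ff l h n b k" "k \<le> n" unfolding setII by auto
  have r1: "0 \<le> aa l h n k \<and> aa l h n k \<le> 1" using aa_range[OF assms, of k] bk by simp
  have r2: "0 \<le> aa l h n (Suc k) \<and> aa l h n (Suc k) \<le> 1" using aa_range[OF assms, of "Suc k"] bk by simp
  show "ctr i x \<in> {0..1} \<and> sig i x \<in> {0..1}"
    using i r1 r2 assms unfolding bk(1) by (cases b) (auto simp: ff_def ctr_def sig_def comp_def)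
  qed
qed

lemma corrII:
  assumes lh: "l < h" and n: "n \<ge> 1"
  shows "correlated (II l h n)"
  unfolding correlated_def independent_is_def
proof
  assume H: "\<forall>i\<in>{1,2::nat}. \<forall>x\<in>set_pmf (II l h n).
     measure_pmf.expectation (cond_pmf (II l h n) {y. snd y = snd x}) (ctr i) =
     measure_pmf.expectation (cond_pmf (II l h n) {y. sig i y = sig i x}) (ctr i)"
  let ?x = "ff l h n True 0"
  have x: "?x \<in> set_pmf (II l h n)" unfolding setII by (rule image_eqI[where x="(True, 0)"]) auto
  have p1: "measure_pmf.prob (II l h n) {y. snd y = snd ?x} > 0"
    by (rule measure_pmf_posI[OF x]) simp
  have p2: "measure_pmf.prob (II l h n) {y. sig 2 y = sig 2 ?x} > 0"
    by (rule measure_pmf_posI[OF x]) simp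
  have z: "measure_pmf.expectation (II l h n) (\<lambda>y. indicator {y. snd y = snd ?x} y * (ctr 2 y - h)) = 0"
    unfolding EII
  proof -
    have "\<And>k. indicator {y. snd y = snd ?x} (ff l h n False k) = (0::real)"
      using aa_inj[OF lh] by (auto simp: ff_def indicator_def)
    then show "(\<Sum>k\<le>n. PP n k * (indicator {y. snd y = snd ?x} (ff l h n True k) * (ctr 2 (ff l h n True k) - h) +
          indicator {y. snd y = snd ?x} (ff l h n False k) * (ctr 2 (ff l h n False k) - h))) / 2 = 0"
      by (simp add: ff_simps)
  qed
  have E1: "measure_pmf.expectation (cond_pmf (II l h n) {y. snd y = snd ?x}) (ctr 2) = h"
    by (rule cond_exp[OF finII p1 z])
  have E2: "measure_pmf.expectation (cond_pmf (II l h n) {y. sig 2 y = sig 2 ?x}) (ctr 2) = sig 2 ?x"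
    using calibII[OF lh] p2 unfolding calibrated_def by blast
  have H2: "\<forall>x\<in>set_pmf (II l h n).
     measure_pmf.expectation (cond_pmf (II l h n) {y. snd y = snd x}) (ctr 2) =
     measure_pmf.expectation (cond_pmf (II l h n) {y. sig 2 y = sig 2 x}) (ctr 2)"
    using H by blast
  have eq: "measure_pmf.expectation (cond_pmf (II l h n) {y. snd y = snd ?x}) (ctr 2) =
     measure_pmf.expectation (cond_pmf (II l h n) {y. sig 2 y = sig 2 ?x}) (ctr 2)"
    using bspec[OF H2 x] .
  have s2: "sig 2 ?x = aa l h n 1" by (simp add: ff_simps)
  have "aa l h n 1 < h"
  proof -
    have "(h - l) / (real n + 1) < h - l" using lh n by (simp add: divide_simps)
    moreover have "aa l h n 1 = l + (h - l) / (real n + 1)" by (simp add: aa_def)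
    ultimately show ?thesis by linarith
  qed
  then show False using eq E1 E2 s2 by linarith
qed

lemma rev_bound:
  assumes v: "v \<ge> 0" and l: "0 \<le> l" and lh: "l < h"
  shows "v * h * (real k / (real k + 1)) \<le> point_rev v v (ff l h n b k)"
proof -
  define d where "d = (h - l) / (real n + 1)"
  have d: "d > 0" using lh by (simp add: d_def)
  have s: "aa l h n k = l + d * real k" "aa l h n (Suc k) = l + d * (real k + 1)"
    by (simp_all add: aa_def d_def algebra_simps)
  let ?s = "l + d * real k" and ?t = "l + d * (real k + 1)"
  have "d * (real k + 1) > 0" using d by simp
  then have tpos: "?t > 0" using l by linarith
  have s0: "?s \<ge> 0" using d l by simp
  have lt: "?s < ?t" using d by (simp add: algebra_simps)
  have ratio: "real k / (real k + 1) \<le> ?s / ?t"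
  proof -
    have "?s / ?t - real k / (real k + 1) = (?s * (real k + 1) - real k * ?t) / (?t * (real k + 1))"
      by (rule diff_frac_eq) (use tpos in auto)
    also have "?s * (real k + 1) - real k * ?t = l" by (simp add: algebra_simps)
    finally have "?s / ?t - real k / (real k + 1) = l / (?t * (real k + 1))" .
    moreover have "l / (?t * (real k + 1)) \<ge> 0" using l tpos by simp
    ultimately show ?thesis by linarith
  qed
  have h0: "h \<ge> 0" using l lh by simp
  show ?thesis
  proof (cases "v = 0")
    case True
    then show ?thesis by (simp add: point_rev_def win_rev_def Let_def)
  next
    case False
    then have vp: "v > 0" using v by simp
    have vlt: "v * ?s < v * ?t" using lt vp by simp
    have "point_rev v v (ff l h n b k) = h * (v * ?s / ?t)"
      using vlt tpos vp by (cases b) (auto simp: point_rev_def win_rev_def Let_def ff_def ctr_def sig_def comp_def s)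
    moreover have "v * h * (real k / (real k + 1)) \<le> v * h * (?s / ?t)"
      by (rule mult_left_mono[OF ratio]) (use v h0 in simp)
    ultimately show ?thesis by (simp add: mult_ac)
  qed
qed

lemma S_bound: "(\<Sum>k\<le>n. PP n k / (real k + 1)) \<le> 2 / (real n + 1)"
proof -
  have eq: "PP n k / (real k + 1) = real (Suc n choose Suc k) / (2^n * (real n + 1))" for k
  proof -
    have "real (Suc k * (Suc n choose Suc k)) = real (Suc n * (n choose k))"
      by (simp only: Suc_times_binomial)
    then have r: "(real k + 1) * real (Suc n choose Suc k) = (real n + 1) * real (n choose k)"
      by (simp only: of_nat_mult of_nat_Suc add.commute)
    have x: "real (n choose k) * (2^n * (real n + 1)) = real (Suc n choose Suc k) * (2^n * (real k + 1))"
    proof -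
      have "real (n choose k) * (2^n * (real n + 1)) = 2^n * ((real n + 1) * real (n choose k))"
        by (simp only: mult_ac)
      also have "\<dots> = 2^n * ((real k + 1) * real (Suc n choose Suc k))" by (simp only: r)
      also have "\<dots> = real (Suc n choose Suc k) * (2^n * (real k + 1))" by (simp only: mult_ac)
      finally show ?thesis .
    qed
    have "PP n k / (real k + 1) = real (n choose k) / (2^n * (real k + 1))"
      unfolding PP_eq by (simp only: divide_divide_eq_left)
    also have "\<dots> = real (Suc n choose Suc k) / (2^n * (real n + 1))"
      by (subst frac_eq_eq) (use x in \<open>simp_all add: add_pos_pos del: binomial_Suc_Suc\<close>)
    finally show ?thesis .
  qed
  have nb: "(\<Sum>k\<le>n. Suc n choose Suc k) \<le> 2 ^ Suc n"
    using choose_row_sum[of "Suc n"] sum.atMost_Suc_shift[of "\<lambda>k. Suc n choose k" n] by simp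
  have "(\<Sum>k\<le>n. PP n k / (real k + 1)) = real (\<Sum>k\<le>n. Suc n choose Suc k) / (2^n * (real n + 1))"
    by (simp only: eq sum_divide_distrib of_nat_sum)
  also have "\<dots> \<le> 2 ^ Suc n / (2^n * (real n + 1))"
  proof (rule divide_right_mono)
    show "real (\<Sum>k\<le>n. Suc n choose Suc k) \<le> 2 ^ Suc n"
      using nb by (metis of_nat_le_iff of_nat_numeral of_nat_power)
  qed simp
  also have "\<dots> = 2 / (real n + 1)" by simp
  finally show ?thesis .
qed

lemma sumPP: "(\<Sum>k\<le>n. PP n k) = 1"
  by (rule sum_pmf_eq_1) auto

lemma revII:
  assumes v: "v \<ge> 0" and l: "0 \<le> l" and lh: "l < h" and h1: "h \<le> 1"
  shows "revenue v v (II l h n) \<ge> v * h - 2 * v / (real n + 1)"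
proof -
  let ?c = "v * h"
  have "(\<Sum>k\<le>n. PP n k * (2 * (?c * (real k / (real k + 1))))) / 2
      \<le> (\<Sum>k\<le>n. PP n k * (point_rev v v (ff l h n True k) + point_rev v v (ff l h n False k))) / 2"
  proof (intro divide_right_mono sum_mono mult_left_mono)
    fix k
    show "2 * (?c * (real k / (real k + 1))) \<le> point_rev v v (ff l h n True k) + point_rev v v (ff l h n False k)"
      by (subst mult_2) (rule add_mono[OF rev_bound[OF v l lh, of k n True] rev_bound[OF v l lh, of k n False]])
  qed simp_all
  also have "\<dots> = revenue v v (II l h n)" unfolding revenue_def EII ..
  finally have R: "(\<Sum>k\<le>n. PP n k * (2 * (?c * (real k / (real k + 1))))) / 2 \<le> revenue v v (II l h n)" .
  have q: "real k / (real k + 1) = 1 - 1 / (real k + 1)" for k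
    by (simp add: field_simps)
  have "(\<Sum>k\<le>n. PP n k * (2 * (?c * (real k / (real k + 1))))) / 2
      = ?c * ((\<Sum>k\<le>n. PP n k) - (\<Sum>k\<le>n. PP n k / (real k + 1)))"
  proof -
    have t: "PP n k * (2 * (?c * (real k / (real k + 1)))) / 2 = ?c * (PP n k - PP n k / (real k + 1))" for k
    proof -
      have kp: "real k + 1 \<noteq> 0" by (simp add: add_nonneg_pos)
      show ?thesis unfolding q using kp by (simp add: field_simps del: pmf_binomial)
    qed
    show ?thesis
      by (simp only: sum_divide_distrib t sum_distrib_left[symmetric] sum_subtractf)
  qed
  also have "\<dots> = ?c * (1 - (\<Sum>k\<le>n. PP n k / (real k + 1)))" by (simp only: sumPP)
  also have "\<dots> \<ge> ?c * (1 - 2 / (real n + 1))"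
    by (rule mult_left_mono) (use S_bound[of n] v l lh in auto)
  finally have R2: "?c * (1 - 2 / (real n + 1)) \<le> revenue v v (II l h n)" using R by linarith
  have "?c * (2 / (real n + 1)) \<le> v * (2 / (real n + 1))"
    by (rule mult_right_mono) (use v h1 in \<open>auto intro: mult_left_le\<close>)
  then have "v * h - 2 * v / (real n + 1) \<le> ?c * (1 - 2 / (real n + 1))"
    by (simp add: algebra_simps)
  with R2 show ?thesis by linarith
qed

theorem mainTheorem4:
  fixes v l h :: real
  assumes "v \<ge> 0" and "0 \<le> l" and "l < h" and "h \<le> 1"
  shows "\<forall>\<epsilon>>0. \<exists>I. info_structure (sym_prior l h) I \<and> calibrated I \<and> correlated I \<and>
           revenue v v I \<ge> v * h - \<epsilon>"
proof (intro allI impI)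
  fix \<epsilon> :: real assume e: "\<epsilon> > 0"
  define n where "n = nat \<lceil>2 * v / \<epsilon>\<rceil> + 1"
  have n1: "n \<ge> 1" by (simp add: n_def)
  have "2 * v / \<epsilon> \<le> real (nat \<lceil>2 * v / \<epsilon>\<rceil>)" by linarith
  then have "2 * v / \<epsilon> \<le> real n + 1" unfolding n_def by simp
  then have "2 * v \<le> \<epsilon> * (real n + 1)" using e by (simp add: divide_simps mult.commute)
  then have b: "2 * v / (real n + 1) \<le> \<epsilon>" by (simp add: divide_simps mult.commute)
  show "\<exists>I. info_structure (sym_prior l h) I \<and> calibrated I \<and> correlated I \<and> revenue v v I \<ge> v * h - \<epsilon>"
  proof (intro exI conjI)
    show "info_structure (sym_prior l h) (II l h n)" using infoII assms by blast
    show "calibrated (II l h n)" using calibII assms by blast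
    show "correlated (II l h n)" using corrII assms n1 by blast
    show "revenue v v (II l h n) \<ge> v * h - \<epsilon>" using revII[OF assms, of n] b by linarith
  qed
qed

end
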